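(* Let $\mathcal{G}=\{G_1,\dots,G_M\}$ be groups, let $\vec z\in\mathbb{R}^p$ have support contained in $\bigcup_{i=1}^MG_i$, let $k\ge k^*$ be positive integers, and let $\widehat{\vec w}=P_k^{\mathcal{G}}(\vec z)$ and $\vec w^*=P_{k^*}^{\mathcal{G}}(\vec z)$. Then \[ \|\widehat{\vec w}-\vec z\|_2^2\le\frac{M-k}{M-k^*}\,\|\vec w^*-\vec z\|_2^2. \]
   Context: $\|\vec w\|_0^{\mathcal{G}}$ is the minimum number of nonzero terms in a decomposition $\vec w=\sum_i\vec a_{G_i}$ with $\operatorname{supp}(\vec a_{G_i})\subseteq G_i$. Exact projection: $P_k^{\mathcal{G}}(\vec z)=\arg\min_{\vec w}\|\vec w-\vec z\|_2^2$ subject to $\|\vec w\|_0^{\mathcal{G}}\le k$. *)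

theory Defs
  imports "HOL-Analysis.Analysis" "HOL-Library.Extended_Nat"
begin

definition vsupp :: "real ^ 'n \<Rightarrow> 'n set" where
  "vsupp x = {j. x $ j \<noteq> 0}"

definition group_l0 :: "(nat \<Rightarrow> 'n set) \<Rightarrow> nat \<Rightarrow> real ^ 'n \<Rightarrow> enat" where
  "group_l0 G M w = Inf {enat (card {i \<in> {1..M}. a i \<noteq> 0}) | a.
      (\<forall>i\<in>{1..M}. vsupp (a i) \<subseteq> G i) \<and> w = (\<Sum>i\<in>{1..M}. a i)}"

definition is_group_proj ::
  "(nat \<Rightarrow> 'n set) \<Rightarrow> nat \<Rightarrow> nat \<Rightarrow> real ^ 'n \<Rightarrow> real ^ 'n \<Rightarrow> bool" where
  "is_group_proj G M k z w \<longleftrightarrow>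
     group_l0 G M w \<le> enat k \<and>
     (\<forall>v. group_l0 G M v \<le> enat k \<longrightarrow> (norm (w - z))\<^sup>2 \<le> (norm (v - z))\<^sup>2)"

end

theory Submission
  imports Defs
begin

definition uerr :: "(nat \<Rightarrow> 'n::finite set) \<Rightarrow> real ^ 'n \<Rightarrow> nat set \<Rightarrow> real" where
  "uerr G z T = (\<Sum>j\<in>{j. j \<notin> (\<Union>i\<in>T. G i)}. (z$j)^2)"

lemma uerr_nonneg: "0 \<le> uerr G z T"
  unfolding uerr_def by (intro sum_nonneg) auto

lemma step:
  fixes G :: "nat \<Rightarrow> 'n::finite set" and z :: "real^'n"
  assumes cov: "vsupp z \<subseteq> (\<Union>i\<in>{1..M}. G i)" and T: "T \<subseteq> {1..M}" and c: "card T < M"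
  shows "\<exists>i\<in>{1..M}-T. uerr G z (insert i T) * real (M - card T) \<le> real (M - card T - 1) * uerr G z T"
proof -
  define U where "U = {j. j \<notin> (\<Union>i\<in>T. G i)}"
  define R where "R = {1..M} - T"
  define g where "g i = (\<Sum>j\<in>U. if j \<in> G i then (z$j)^2 else 0)" for i
  have gain: "uerr G z T = uerr G z (insert i T) + g i" for i
  proof -
    have e1: "{j. j \<notin> (\<Union>i\<in>insert i T. G i)} = U - G i" by (auto simp: U_def)
    have a: "uerr G z T = (\<Sum>j\<in>U. (z$j)^2)" by (simp add: uerr_def U_def)
    have b: "(\<Sum>j\<in>U. (z$j)^2) = (\<Sum>j\<in>U - G i. (z$j)^2) + (\<Sum>j\<in>U \<inter> G i. (z$j)^2)"
    proof -
      have "U - (U \<inter> G i) = U - G i" by blast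
      then show ?thesis using sum.subset_diff[of "U \<inter> G i" U "\<lambda>j. (z$j)^2"] by simp
    qed
    have g: "(\<Sum>j\<in>U \<inter> G i. (z$j)^2) = g i"
      unfolding g_def by (rule sum.inter_restrict) simp
    have c: "uerr G z (insert i T) = (\<Sum>j\<in>U - G i. (z$j)^2)"
      unfolding uerr_def e1 ..
    from a b c g show ?thesis by linarith
  qed
  have finR: "finite R" by (simp add: R_def)
  have cardR: "card R = M - card T" using T by (simp add: R_def card_Diff_subset finite_subset)
  have Rne: "R \<noteq> {}" using cardR c by auto
  have sumg: "uerr G z T \<le> (\<Sum>i\<in>R. g i)"
  proof -
    have "(\<Sum>i\<in>R. g i) = (\<Sum>j\<in>U. \<Sum>i\<in>R. if j \<in> G i then (z$j)^2 else 0)"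
      unfolding g_def by (rule sum.swap)
    moreover have "uerr G z T = (\<Sum>j\<in>U. (z$j)^2)" by (simp add: uerr_def U_def)
    moreover have "(z$j)^2 \<le> (\<Sum>i\<in>R. if j \<in> G i then (z$j)^2 else 0)" if j: "j \<in> U" for j
    proof (cases "z$j = 0")
      case True then show ?thesis by (simp add: sum_nonneg)
    next
      case False
      then have "j \<in> vsupp z" by (simp add: vsupp_def)
      with cov obtain i where i: "i \<in> {1..M}" "j \<in> G i" by auto
      with j have "i \<in> R" by (auto simp: U_def R_def)
      have "(z$j)^2 = (if j \<in> G i then (z$j)^2 else 0)" using i by simp
      also have "\<dots> \<le> (\<Sum>i\<in>R. if j \<in> G i then (z$j)^2 else 0)"
        by (rule member_le_sum[OF \<open>i \<in> R\<close> _ finR]) auto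
      finally show ?thesis .
    qed
    ultimately show ?thesis by (simp add: sum_mono)
  qed
  define mx where "mx = Max (g ` R)"
  have "mx \<in> g ` R" unfolding mx_def using finR Rne by (intro Max_in) auto
  then obtain i where iR: "i \<in> R" and gi: "g i = mx" by auto
  have "(\<Sum>i\<in>R. g i) \<le> of_nat (card R) * mx"
    by (rule sum_bounded_above) (use finR in \<open>auto simp: mx_def\<close>)
  with sumg gi cardR have key: "uerr G z T \<le> real (M - card T) * g i" by simp
  have m1: "real (M - card T - 1) = real (M - card T) - 1" using c by simp
  show ?thesis
  proof (intro bexI[OF _ iR[unfolded R_def]])
    show "uerr G z (insert i T) * real (M - card T) \<le> real (M - card T - 1) * uerr G z T"
      using gain[of i] key unfolding m1 by (simp add: algebra_simps)
  qed
qed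

lemma normsq: "(norm (x::real^'n::finite))^2 = (\<Sum>j\<in>UNIV. (x$j)^2)"
  unfolding power2_norm_eq_inner inner_vec_def by (simp add: power2_eq_square)

lemma iter:
  fixes G :: "nat \<Rightarrow> 'n::finite set" and z :: "real^'n"
  assumes cov: "vsupp z \<subseteq> (\<Union>i\<in>{1..M}. G i)" and S: "S \<subseteq> {1..M}"
  shows "card S + n \<le> M \<Longrightarrow> \<exists>T. S \<subseteq> T \<and> T \<subseteq> {1..M} \<and> card T = card S + n \<and>
     uerr G z T * real (M - card S) \<le> real (M - card S - n) * uerr G z S"
proof (induction n)
  case 0
  then show ?case using S by (auto intro!: exI[of _ S])
next
  case (Suc n)
  then obtain T where T: "S \<subseteq> T" "T \<subseteq> {1..M}" "card T = card S + n"
    and ih: "uerr G z T * real (M - card S) \<le> real (M - card S - n) * uerr G z S" by auto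
  have finT: "finite T" using T(2) finite_subset by blast
  from step[OF cov T(2)] Suc.prems T(3) obtain i where i: "i \<in> {1..M} - T"
    and st: "uerr G z (insert i T) * real (M - card T) \<le> real (M - card T - 1) * uerr G z T" by auto
  define a where "a = real (M - card S - n)"
  have apos: "a \<ge> 1" using Suc.prems unfolding a_def by simp
  have e1: "real (M - card T) = a" using T(3) unfolding a_def by simp
  have e2: "real (M - card T - 1) = a - 1" using T(3) Suc.prems unfolding a_def by simp
  have e3: "real (M - card S - Suc n) = a - 1" using Suc.prems unfolding a_def by simp
  have ms: "real (M - card S) \<ge> 0" by simp
  define u where "u = uerr G z (insert i T)"
  define v where "v = uerr G z T"
  define w where "w = uerr G z S"
  define m where "m = real (M - card S)"
  have st': "u * a \<le> (a - 1) * v" using st unfolding e1 e2 u_def v_def .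
  have ih': "v * m \<le> a * w" using ih unfolding v_def w_def m_def a_def by simp
  have "u * m * a = (u * a) * m" by simp
  also have "\<dots> \<le> ((a - 1) * v) * m" using st' ms m_def by (intro mult_right_mono) auto
  also have "\<dots> = (a - 1) * (v * m)" by simp
  also have "\<dots> \<le> (a - 1) * (a * w)" using ih' apos by (intro mult_left_mono) auto
  finally have "u * m * a \<le> ((a - 1) * w) * a" by (simp add: algebra_simps)
  then have "u * m \<le> (a - 1) * w" using apos by simp
  then have f1: "uerr G z (insert i T) * real (M - card S) \<le> real (M - card S - Suc n) * uerr G z S"
    using e3 unfolding u_def m_def w_def by simp
  have f2: "card (insert i T) = card S + Suc n" using i finT T(3) by simp
  have f3: "S \<subseteq> insert i T" "insert i T \<subseteq> {1..M}" using T i by auto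
  show ?case by (intro exI[of _ "insert i T"] conjI f1 f2 f3)
qed

lemma construct:
  fixes G :: "nat \<Rightarrow> 'n::finite set" and z :: "real^'n"
  assumes T: "T \<subseteq> {1..M}"
  shows "\<exists>w. group_l0 G M w \<le> enat (card T) \<and> (norm (w - z))^2 = uerr G z T"
proof -
  define V where "V = (\<Union>i\<in>T. G i)"
  define f where "f j = (SOME i. i \<in> T \<and> j \<in> G i)" for j
  have f: "f j \<in> T \<and> j \<in> G (f j)" if jV: "j \<in> V" for j
  proof -
    obtain i where "i \<in> T" "j \<in> G i" using jV by (auto simp: V_def)
    then show ?thesis unfolding f_def by (rule someI[of "\<lambda>i. i \<in> T \<and> j \<in> G i", OF conjI])
  qed
  define a where "a i = (\<chi> j. if j \<in> V \<and> f j = i then z$j else 0)" for i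
  define w :: "real^'n" where "w = (\<chi> j. if j \<in> V then z$j else 0)"
  have supp: "vsupp (a i) \<subseteq> G i" for i
    using f by (auto simp: vsupp_def a_def)
  have sum: "w = (\<Sum>i\<in>{1..M}. a i)"
  proof (rule vec_eq_iff[THEN iffD2], rule allI)
    fix j
    have "(\<Sum>i\<in>{1..M}. a i) $ j = (\<Sum>i\<in>{1..M}. if j \<in> V \<and> f j = i then z$j else 0)"
      by (simp add: a_def sum_component)
    also have "\<dots> = w $ j"
    proof (cases "j \<in> V")
      case True
      then have "f j \<in> T" using f by blast
      then have "f j \<in> {1..M}" using T by blast
      then show ?thesis using True by (simp add: w_def sum.delta)
    next
      case False then show ?thesis by (simp add: w_def)
    qed
    finally show "w $ j = (\<Sum>i\<in>{1..M}. a i) $ j" by simp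
  qed
  have sub: "{i \<in> {1..M}. a i \<noteq> 0} \<subseteq> T"
  proof
    fix i assume "i \<in> {i \<in> {1..M}. a i \<noteq> 0}"
    then obtain j where "a i $ j \<noteq> 0" by (auto simp: vec_eq_iff)
    then have "j \<in> V" "f j = i" by (auto simp: a_def split: if_splits)
    then show "i \<in> T" using f by auto
  qed
  have "card {i \<in> {1..M}. a i \<noteq> 0} \<le> card T"
    using finite_subset[OF T] sub by (simp add: card_mono)
  moreover have "group_l0 G M w \<le> enat (card {i \<in> {1..M}. a i \<noteq> 0})"
    unfolding group_l0_def using supp sum by (intro Inf_lower) blast
  ultimately have g: "group_l0 G M w \<le> enat (card T)"
    using order_trans enat_ord_simps(1) by blast
  have "(norm (w - z))^2 = (\<Sum>j\<in>UNIV. if j \<notin> V then (z$j)^2 else 0)"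
    unfolding normsq by (rule sum.cong) (auto simp: w_def)
  also have "\<dots> = uerr G z T"
    unfolding uerr_def V_def by (rule sum.mono_neutral_cong_left[symmetric]) auto
  finally have "(norm (w - z))^2 = uerr G z T" .
  then show ?thesis using g by (intro exI[of _ w] conjI)
qed

lemma lower:
  fixes G :: "nat \<Rightarrow> 'n::finite set" and z w :: "real^'n"
  assumes "group_l0 G M w \<le> enat k"
  shows "\<exists>S. S \<subseteq> {1..M} \<and> card S \<le> k \<and> uerr G z S \<le> (norm (w - z))^2"
proof -
  define A where "A = {enat (card {i \<in> {1..M}. a i \<noteq> 0}) | a.
      (\<forall>i\<in>{1..M}. vsupp (a i) \<subseteq> G i) \<and> w = (\<Sum>i\<in>{1..M}. a i)}"
  have "A \<noteq> {}" using assms unfolding group_l0_def A_def[symmetric] Inf_enat_def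
    by (auto split: if_splits)
  then have "Inf A \<in> A" unfolding Inf_enat_def by (auto intro: LeastI)
  then obtain a where a: "\<forall>i\<in>{1..M}. vsupp (a i) \<subseteq> G i" "w = (\<Sum>i\<in>{1..M}. a i)"
    and c: "Inf A = enat (card {i \<in> {1..M}. a i \<noteq> 0})" unfolding A_def by blast
  define S where "S = {i \<in> {1..M}. a i \<noteq> 0}"
  have cS: "card S \<le> k" using assms c unfolding group_l0_def A_def[symmetric] S_def by simp
  have w0: "w $ j = 0" if "j \<notin> (\<Union>i\<in>S. G i)" for j
  proof -
    have "a i $ j = 0" if "i \<in> {1..M}" for i
    proof (cases "a i = 0")
      case False
      then have "i \<in> S" using that by (simp add: S_def)
      then have "j \<notin> G i" using \<open>j \<notin> (\<Union>i\<in>S. G i)\<close> by auto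
      then show ?thesis using a(1) that by (auto simp: vsupp_def)
    qed simp
    then show ?thesis using a(2) by (simp add: sum_component)
  qed
  have "uerr G z S = (\<Sum>j\<in>UNIV. if j \<notin> (\<Union>i\<in>S. G i) then (z$j)^2 else 0)"
    unfolding uerr_def by (rule sum.mono_neutral_cong_left) auto
  also have "\<dots> \<le> (\<Sum>j\<in>UNIV. ((w - z)$j)^2)"
    by (rule sum_mono) (auto simp: w0)
  also have "\<dots> = (norm (w - z))^2" by (simp add: normsq)
  finally have u: "uerr G z S \<le> (norm (w - z))^2" .
  have "S \<subseteq> {1..M}" by (auto simp: S_def)
  then show ?thesis using cS u by (intro exI[of _ S] conjI)
qed


lemma uerr_full:
  assumes cov: "vsupp z \<subseteq> (\<Union>i\<in>{1..M}. G i)"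
  shows "uerr G z {1..M} = 0"
  unfolding uerr_def
proof (rule sum.neutral, rule ballI)
  fix j assume j: "j \<in> {j. j \<notin> (\<Union>i\<in>{1..M}. G i)}"
  then have "j \<notin> vsupp z" using cov by blast
  then show "(z$j)^2 = 0" by (simp add: vsupp_def)
qed

theorem lemma6:
  fixes G :: "nat \<Rightarrow> 'n::finite set" and M k kstar :: nat
    and z w_hat w_star :: "real ^ 'n"
  assumes "vsupp z \<subseteq> (\<Union>i\<in>{1..M}. G i)"
    and "1 \<le> kstar" and "kstar \<le> k" and "k \<le> M"
    and "is_group_proj G M k z w_hat"
    and "is_group_proj G M kstar z w_star"
  shows "(norm (w_hat - z))\<^sup>2
           \<le> (real M - real k) / (real M - real kstar) * (norm (w_star - z))\<^sup>2"
proof -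
  note cov = assms(1)
  have gs: "group_l0 G M w_star \<le> enat kstar" using assms(6) by (simp add: is_group_proj_def)
  obtain S where S: "S \<subseteq> {1..M}" "card S \<le> kstar" and uS: "uerr G z S \<le> (norm (w_star - z))^2"
    using lower[OF gs] by blast
  have "card S + (k - card S) \<le> M" using S assms(3,4) by simp
  from iter[OF cov S(1) this] obtain T where T: "T \<subseteq> {1..M}" "card T = k"
    and uT: "uerr G z T * real (M - card S) \<le> real (M - card S - (k - card S)) * uerr G z S"
    using S assms(3) by auto
  obtain w where w: "group_l0 G M w \<le> enat (card T)" "(norm (w - z))^2 = uerr G z T"
    using construct[OF T(1)] by blast
  have hat: "(norm (w_hat - z))^2 \<le> uerr G z T"
    using assms(5) w T(2) unfolding is_group_proj_def by metis
  have N0: "0 \<le> (norm (w_star - z))^2" by simp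
  show ?thesis
  proof (cases "k = M")
    case True
    then have "T = {1..M}" using T by (intro card_subset_eq) auto
    then have "uerr G z T = 0" using uerr_full[OF cov] by simp
    then show ?thesis using hat True by simp
  next
    case False
    then have kM: "k < M" using assms(4) by simp
    have e: "real (M - card S - (k - card S)) = real M - real k" using S assms(3,4) by simp
    have pos: "real (M - card S) > 0" using S assms(3) kM by simp
    have e2: "real (M - card S) = real M - real (card S)" using S assms(3) kM by simp
    have "uerr G z T \<le> (real M - real k) / real (M - card S) * uerr G z S"
    proof -
      have "uerr G z T \<le> ((real M - real k) * uerr G z S) / real (M - card S)"
        using uT unfolding e by (subst pos_le_divide_eq[OF pos])
      then show ?thesis by simp
    qed
    also have "\<dots> \<le> (real M - real k) / (real M - real kstar) * uerr G z S"
    proof (rule mult_right_mono[OF _ uerr_nonneg])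
      show "(real M - real k) / real (M - card S) \<le> (real M - real k) / (real M - real kstar)"
        unfolding e2 using S assms(3) kM by (intro divide_left_mono) auto
    qed
    also have "\<dots> \<le> (real M - real k) / (real M - real kstar) * (norm (w_star - z))^2"
      using uS kM assms(3) by (intro mult_left_mono) auto
    finally have "uerr G z T \<le> (real M - real k) / (real M - real kstar) * (norm (w_star - z))^2" .
    then show ?thesis using hat by (rule order_trans[rotated])
  qed
qed

end
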